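(* Let $\bm v_1, \dots, \bm v_N \in \mathbb{S}^{r-1}$ span $\mathbb{R}^r$, let $\bm V \in \mathbb{R}^{r\times N}$ have the $\bm v_i$ as columns, let $\bm v := \mathrm{vec}(\bm V)$, and let $\bm M^\star \in \mathcal{B}(N,r)$ satisfy $\bm v^\top \bm M^\star \bm v = N^2$. Then every eigenvector of $\bm M^\star$ with nonzero eigenvalue lies in $$V_{\mathrm{sym}} := \{\mathrm{vec}(\bm S \bm V) : \bm S \in \mathbb{R}^{r\times r}_{\mathrm{sym}}\} \subset \mathbb{R}^{rN}.$$ Moreover, $\bm v$ is an eigenvector of $\bm M^\star$ with eigenvalue $N$, and every eigenvector of $\bm M^\star$ with nonzero eigenvalue that is orthogonal to $\bm v$ lies in $$V'_{\mathrm{sym}} := \{\mathrm{vec}(\bm S \bm V) : \bm S \in \mathbb{R}^{r\times r}_{\mathrm{sym}},\ \bm v_i^\top \bm S \bm v_i = 0 \text{ for all } i\in[N]\}.$$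
   Context: $\mathbb{S}^{r-1}$ is the unit sphere in $\mathbb{R}^r$; $\mathbb{R}^{r\times r}_{\mathrm{sym}}$ is the space of symmetric $r\times r$ real matrices. For $\bm V \in \mathbb{R}^{r\times N}$ with columns $\bm v_i$, $\mathrm{vec}(\bm V) \in \mathbb{R}^{rN}$ is the concatenation $(\bm v_1;\dots;\bm v_N)$. A matrix $\bm M \in \mathbb{R}^{rN\times rN}$ is viewed as an $N\times N$ array of $r\times r$ blocks, $\bm M_{[ij]}$ denoting block $(i,j)$. $\mathcal{B}(N,r)$ is the set of symmetric $\bm M \in \mathbb{R}^{rN\times rN}$ with $\bm M \succeq 0$, $\bm M_{[ii]} = \bm I_r$ for all $i$, and $\bm M_{[ij]} = \bm M_{[ij]}^\top$ for all $i,j$. *)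

theory Defs
  imports "HOL-Analysis.Analysis"
begin

text \<open>Dimensions are types: 'r indexes R^r, 'n indexes [N]. A matrix V in R^(r x N)
  is "real^'n^'r" (rows indexed by 'r, columns by 'n). Vectors in R^(rN) are indexed by
  pairs (i,a) with i the column (block) index and a the coordinate within the block,
  so vec(V) $ (i,a) = V $ a $ i.\<close>

definition vecm :: "real^'n^'r \<Rightarrow> real^('n \<times> 'r)" where
  "vecm V = (\<chi> p. V $ snd p $ fst p)"

definition blk :: "real^('n::finite \<times> 'r::finite)^('n \<times> 'r) \<Rightarrow> 'n \<Rightarrow> 'n \<Rightarrow> real^'r^'r" where
  "blk M i j = (\<chi> a b. M $ (i, a) $ (j, b))"

definition psd :: "real^'k^'k \<Rightarrow> bool" where
  "psd M \<longleftrightarrow> (\<forall>x. 0 \<le> x \<bullet> (M *v x))"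

definition Bset :: "(real^('n::finite \<times> 'r::finite)^('n \<times> 'r)) set" where
  "Bset = {M. transpose M = M \<and> psd M \<and> (\<forall>i. blk M i i = mat 1)
              \<and> (\<forall>i j. transpose (blk M i j) = blk M i j)}"

definition Vsym :: "real^'n^'r \<Rightarrow> (real^('n \<times> 'r)) set" where
  "Vsym V = {vecm (S ** V) | S. transpose S = S}"

definition Vsym' :: "real^'n^'r \<Rightarrow> (real^('n \<times> 'r)) set" where
  "Vsym' V = {vecm (S ** V) | S. transpose S = S \<and>
                 (\<forall>i. column i V \<bullet> (S *v column i V) = 0)}"

definition is_eigvec :: "real^'k^'k \<Rightarrow> real^'k \<Rightarrow> real \<Rightarrow> bool" where
  "is_eigvec M x c \<longleftrightarrow> x \<noteq> 0 \<and> M *v x = c *\<^sub>R x"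

end

theory Submission imports Defs begin

definition emb :: "('n::finite \<Rightarrow> real^'r::finite) \<Rightarrow> real^('n\<times>'r)" where
  "emb g = (\<chi> p. g (fst p) $ snd p)"
definition vb :: "real^('n::finite\<times>'r::finite) \<Rightarrow> 'n \<Rightarrow> real^'r" where
  "vb x k = (\<chi> b. x $ (k,b))"

lemma emb_vb: "emb (vb x) = x"
  by (simp add: emb_def vb_def vec_eq_iff)
lemma vb_emb: "vb (emb g) = g"
  by (simp add: emb_def vb_def vec_eq_iff fun_eq_iff)

lemma sum_pairs: "(\<Sum>p\<in>(UNIV::('a::finite\<times>'b::finite) set). f p) = (\<Sum>k\<in>UNIV. \<Sum>b\<in>UNIV. f (k,b))"
  unfolding UNIV_Times_UNIV[symmetric] by (simp add: sum.cartesian_product)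
lemma inner_emb: "emb g \<bullet> emb h = (\<Sum>k\<in>UNIV. g k \<bullet> h k)"
  unfolding inner_vec_def emb_def by (subst sum_pairs) simp

lemma mult_emb: "M *v emb g = emb (\<lambda>k. \<Sum>l\<in>UNIV. blk M k l *v g l)"
  unfolding vec_eq_iff
proof
  fix p :: "'a \<times> 'b"
  obtain k a where p: "p = (k,a)" by fastforce
  show "(M *v emb g) $ p = emb (\<lambda>k. \<Sum>l\<in>UNIV. blk M k l *v g l) $ p"
    unfolding p matrix_vector_mult_def emb_def blk_def
    by (subst sum_pairs) simp
qed

lemma vecm_emb: "vecm V = emb (\<lambda>i. column i V)"
  by (simp add: vecm_def emb_def column_def)

lemma emb_diff: "emb g - emb h = emb (\<lambda>k. g k - h k)"
  by (simp add: emb_def vec_eq_iff)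
lemma emb_scale: "c *\<^sub>R emb g = emb (\<lambda>k. c *\<^sub>R g k)"
  by (simp add: emb_def vec_eq_iff)
lemma emb_eq: "emb g = emb h \<longleftrightarrow> g = h"
  by (metis vb_emb)

lemma psd_ker:
  fixes M :: "real^'k^'k"
  assumes "transpose M = M" "psd M" "x \<bullet> (M *v x) = 0"
  shows "M *v x = 0"
proof -
  let ?y = "M *v x"
  have sym: "u \<bullet> (M *v w) = w \<bullet> (M *v u)" for u w
    by (metis assms(1) dot_lmul_matrix inner_commute vector_transpose_matrix)
  have "0 \<le> (x - t *\<^sub>R ?y) \<bullet> (M *v (x - t *\<^sub>R ?y))" for t
    using assms(2) unfolding psd_def by blast
  also have "(x - t *\<^sub>R ?y) \<bullet> (M *v (x - t *\<^sub>R ?y)) = - 2 * t * (?y \<bullet> ?y) + t^2 * (?y \<bullet> (M *v ?y))" for t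
    using assms(3) sym[of x ?y]
    by (simp add: algebra_simps inner_diff_left inner_diff_right power2_eq_square inner_commute)
  finally have h: "0 \<le> - 2 * t * (?y \<bullet> ?y) + t^2 * (?y \<bullet> (M *v ?y))" for t .
  show ?thesis
  proof (rule ccontr)
    assume "?y \<noteq> 0"
    then have a: "?y \<bullet> ?y > 0" by simp
    define b where "b = ?y \<bullet> (M *v ?y)"
    have b0: "b \<ge> 0" using assms(2) unfolding psd_def b_def by blast
    define t where "t = (?y \<bullet> ?y) / (b + 1)"
    have tpos: "t > 0" using a b0 unfolding t_def by simp
    have "0 \<le> - 2 * t * (?y \<bullet> ?y) + t^2 * b" using h unfolding b_def by blast
    then have "0 \<le> t * (- 2 * (?y \<bullet> ?y) + t * b)" by (simp add: algebra_simps power2_eq_square)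
    then have "0 \<le> - 2 * (?y \<bullet> ?y) + t * b" using tpos by (simp add: zero_le_mult_iff)
    moreover have "t * b \<le> ?y \<bullet> ?y" unfolding t_def using a b0
      by (simp add: field_simps)
    ultimately show False using a by linarith
  qed
qed
lemma inner_tr: "b \<bullet> ((A::real^'m^'k) *v a) = (transpose A *v b) \<bullet> a"
  by (metis dot_lmul_matrix transpose_matrix_vector)

lemma trV_comp: "(transpose V *v y) $ j = column j V \<bullet> y"
  by (simp add: matrix_vector_mult_def transpose_def column_def inner_vec_def)

lemma trmult_comp: "(transpose A ** B) $ j $ i = column j A \<bullet> column i (B::real^'n^'r)"
  by (simp add: matrix_matrix_mult_def transpose_def column_def inner_vec_def)

lemma column_mult: "column i (S ** V) = S *v column i V"
  by (simp add: vec_eq_iff column_def matrix_matrix_mult_def matrix_vector_mult_def)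

lemma perp_zero:
  fixes V :: "real^'n^'r"
  assumes "span (columns V) = UNIV" "\<forall>j. column j V \<bullet> y = 0"
  shows "y = 0"
proof -
  have "orthogonal y y"
    by (rule orthogonal_to_span[of y "columns V"]) 
       (use assms in \<open>auto simp: columns_def orthogonal_def inner_commute\<close>)
  then show ?thesis by (simp add: orthogonal_self)
qed

lemma sym_S:
  fixes V X :: "real^'n^'r"
  assumes sp: "span (columns V) = UNIV"
    and hs: "\<forall>i j. column j V \<bullet> column i X = column i V \<bullet> column j X"
  shows "\<exists>S. transpose S = S \<and> S ** V = X"
proof -
  define F where "F = V ** transpose V"
  have Fker: "\<forall>c. F *v c = 0 \<longrightarrow> c = 0"
  proof (intro allI impI)
    fix c assume "F *v c = 0"
    then have "c \<bullet> (V *v (transpose V *v c)) = 0"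
      by (metis F_def matrix_vector_mul_assoc inner_zero_right)
    then have "(transpose V *v c) \<bullet> (transpose V *v c) = 0"
      by (metis inner_tr)
    then have "transpose V *v c = 0" by simp
    then show "c = 0" using perp_zero[OF sp] trV_comp by (metis vector_component_simps(1)  zero_index)
  qed
  then obtain G where GF: "G ** F = mat 1" using matrix_left_invertible_ker by blast
  then have FG: "F ** G = mat 1" using matrix_left_right_inverse by blast
  have Ft: "transpose F = F" by (simp add: F_def matrix_transpose_mul)
  have "transpose G ** F = mat 1"
    by (metis FG Ft matrix_transpose_mul transpose_mat)
  then have Gt: "transpose G = G"
    by (metis FG matrix_mul_assoc matrix_mul_lid matrix_mul_rid)
  have Hsym: "transpose V ** X = transpose X ** V"
    using hs by (simp add: vec_eq_iff trmult_comp inner_commute)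
  have XP: "X ** (transpose V ** G ** V) = X"
    unfolding matrix_eq
  proof
    fix c
    define d where "d = c - (transpose V ** G ** V) *v c"
    have "V *v d = 0"
      unfolding d_def matrix_vector_mult_diff_distrib matrix_vector_mul_assoc
      by (metis F_def FG matrix_mul_assoc matrix_mul_lid right_minus_eq)
    then have "transpose V *v (X *v d) = 0"
      by (metis Hsym matrix_vector_mul_assoc matrix_vector_mult_0_right)
    then have "X *v d = 0" using perp_zero[OF sp] trV_comp by (metis zero_index)
    then show "(X ** (transpose V ** G ** V)) *v c = X *v c"
      unfolding d_def matrix_vector_mult_diff_distrib
      by (simp add: matrix_vector_mul_assoc)
  qed
  define S where "S = X ** transpose V ** G"
  have SV: "S ** V = X" using XP by (simp add: S_def matrix_mul_assoc)
  have key: "F ** (X ** transpose V) = (V ** transpose X) ** F"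
  proof -
    have "F ** (X ** transpose V) = V ** (transpose V ** X) ** transpose V"
      by (simp add: F_def matrix_mul_assoc)
    also have "\<dots> = V ** (transpose X ** V) ** transpose V" by (simp add: Hsym)
    also have "\<dots> = (V ** transpose X) ** F" by (simp add: F_def matrix_mul_assoc)
    finally show ?thesis .
  qed
  have "S = G ** (F ** (X ** transpose V)) ** G"
    by (simp add: S_def GF matrix_mul_assoc)
  also have "\<dots> = G ** ((V ** transpose X) ** F) ** G" by (simp add: key)
  also have "\<dots> = G ** V ** transpose X"
    by (metis FG matrix_mul_assoc matrix_mul_rid)
  also have "\<dots> = transpose S"
    by (simp add: S_def matrix_transpose_mul Gt matrix_mul_assoc)
  finally show ?thesis using SV by metis
qed
definition g2 :: "'n::finite \<Rightarrow> 'n \<Rightarrow> real^'r::finite \<Rightarrow> real^'r \<Rightarrow> 'n \<Rightarrow> real^'r" where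
  "g2 i j a b k = (if k = i then a else 0) - (if k = j then b else 0)"

lemma sum_g2: "(\<Sum>l\<in>UNIV. (A l :: real^'r^'r) *v g2 i j a b l) = A i *v a - A j *v b" (is "_ = ?rhs")
proof -
  have "(\<Sum>l\<in>UNIV. A l *v g2 i j a b l)
      = (\<Sum>l\<in>UNIV. (if l = i then A l *v a else 0)) - (\<Sum>l\<in>UNIV. (if l = j then A l *v b else 0))"
    unfolding g2_def matrix_vector_mult_diff_distrib sum_subtractf[symmetric]
    by (rule sum.cong) auto
  also have "\<dots> = ?rhs" by simp
  finally show ?thesis .
qed

lemma inner_sum_g2: "(\<Sum>k\<in>UNIV. g2 i j a b k \<bullet> (w k :: real^'r)) = a \<bullet> w i - b \<bullet> w j" (is "_ = ?rhs")
proof -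
  have "(\<Sum>k\<in>UNIV. g2 i j a b k \<bullet> w k)
      = (\<Sum>k\<in>UNIV. (if k = i then a \<bullet> w k else 0)) - (\<Sum>k\<in>UNIV. (if k = j then b \<bullet> w k else 0))"
    unfolding g2_def inner_diff_left sum_subtractf[symmetric]
    by (rule sum.cong) auto
  also have "\<dots> = ?rhs" by simp
  finally show ?thesis .
qed

context
  fixes M :: "real^('n::finite \<times> 'r::finite)^('n \<times> 'r)"
  assumes MB: "M \<in> Bset"
begin

lemma Bkk: "blk M k k = mat 1"
  using MB unfolding Bset_def by blast

lemma Mtr: "M $ p $ q = M $ q $ p"
proof -
  have tM: "transpose M = M" using MB unfolding Bset_def by blast
  have "M $ p $ q = transpose M $ p $ q" using tM by simp
  also have "\<dots> = M $ q $ p" unfolding transpose_def by simp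
  finally show ?thesis .
qed

lemma Btr: "transpose (blk M k l) = blk M l k"
  unfolding vec_eq_iff transpose_def blk_def
  by (simp add: Mtr[of "(k, _)" "(l, _)"])

lemma Bsym: "blk M k l = blk M l k"
proof -
  have "transpose (blk M k l) = blk M k l" using MB unfolding Bset_def by blast
  then show ?thesis using Btr by metis
qed

lemma Mg2: "M *v emb (g2 i j a b) = emb (\<lambda>k. blk M k i *v a - blk M k j *v b)"
  by (simp add: mult_emb sum_g2)

lemma quad2: "emb (g2 i j a b) \<bullet> (M *v emb (g2 i j a b)) = a \<bullet> a + b \<bullet> b - 2 * (a \<bullet> (blk M i j *v b))"
proof -
  have t: "b \<bullet> (blk M j i *v a) = a \<bullet> (blk M i j *v b)"
    by (metis Btr inner_commute inner_tr)
  have "emb (g2 i j a b) \<bullet> (M *v emb (g2 i j a b))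
      = (\<Sum>k\<in>UNIV. g2 i j a b k \<bullet> (blk M k i *v a - blk M k j *v b))"
    by (simp only: Mg2 inner_emb)
  also have "\<dots> = a \<bullet> (blk M i i *v a - blk M i j *v b) - b \<bullet> (blk M j i *v a - blk M j j *v b)"
    by (rule inner_sum_g2)
  also have "\<dots> = a \<bullet> a + b \<bullet> b - 2 * (a \<bullet> (blk M i j *v b))"
    using t by (simp add: Bkk inner_diff_right inner_commute)
  finally show ?thesis .
qed

lemma psd2: "0 \<le> a \<bullet> a + b \<bullet> b - 2 * (a \<bullet> (blk M i j *v b))"
proof -
  have "0 \<le> emb (g2 i j a b) \<bullet> (M *v emb (g2 i j a b))"
    using MB unfolding Bset_def psd_def by blast
  then show ?thesis by (simp only: quad2)
qed

lemma ker2: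
  assumes "a \<bullet> a + b \<bullet> b - 2 * (a \<bullet> (blk M i j *v b)) = 0"
  shows "blk M k i *v a = blk M k j *v b"
proof -
  have "M *v emb (g2 i j a b) = 0"
    using MB quad2[of i j a b] assms by (intro psd_ker) (auto simp: Bset_def)
  then have "emb (\<lambda>k. blk M k i *v a - blk M k j *v b) = 0"
    by (simp only: Mg2)
  then have "vb (emb (\<lambda>k. blk M k i *v a - blk M k j *v b)) k = vb 0 k" by simp
  moreover have "vb 0 k = 0" by (simp add: vb_def vec_eq_iff)
  ultimately have "blk M k i *v a - blk M k j *v b = 0" by (simp only: vb_emb)
  then show ?thesis by simp
qed

end

theorem lemma2:
  fixes V :: "real^'n^'r" and Mstar :: "real^('n \<times> 'r)^('n \<times> 'r)"
  assumes unit: "\<forall>i. norm (column i V) = 1"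
    and spans: "span (columns V) = UNIV"
    and MB: "Mstar \<in> Bset"
    and val: "vecm V \<bullet> (Mstar *v vecm V) = (real CARD('n))^2"
  shows "(\<forall>x lam. is_eigvec Mstar x lam \<and> lam \<noteq> 0 \<longrightarrow> x \<in> Vsym V)
       \<and> is_eigvec Mstar (vecm V) (real CARD('n))
       \<and> (\<forall>x lam. is_eigvec Mstar x lam \<and> lam \<noteq> 0 \<and> x \<bullet> vecm V = 0 \<longrightarrow> x \<in> Vsym' V)"
proof -
  define v where "v i = column i V" for i
  define B where "B k l = blk Mstar k l" for k l
  define N where "N = real CARD('n)"
  have vv: "v i \<bullet> v i = 1" for i
    using unit unfolding v_def by (metis power2_norm_eq_inner one_power2)
  have le: "v i \<bullet> (B i j *v v j) \<le> 1" for i j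
    using psd2[OF MB, of "v i" "v j" i j] vv unfolding B_def by simp
  have sumval: "(\<Sum>k\<in>UNIV. \<Sum>l\<in>UNIV. v k \<bullet> (B k l *v v l)) = N^2"
  proof -
    have "vecm V \<bullet> (Mstar *v vecm V) = (\<Sum>k\<in>UNIV. \<Sum>l\<in>UNIV. v k \<bullet> (B k l *v v l))"
      by (simp add: vecm_emb mult_emb inner_emb inner_sum_right v_def B_def)
    then show ?thesis using val unfolding N_def by linarith
  qed
  have "(\<Sum>k\<in>UNIV. \<Sum>l\<in>UNIV. 1 - v k \<bullet> (B k l *v v l)) = N * N - N^2"
    by (simp add: sum_subtractf sumval N_def)
  then have z: "(\<Sum>k\<in>UNIV. \<Sum>l\<in>UNIV. 1 - v k \<bullet> (B k l *v v l)) = 0"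
    by (simp add: power2_eq_square)
  have eq1: "v i \<bullet> (B i j *v v j) = 1" for i j
  proof -
    have nn: "\<And>k. k \<in> UNIV \<Longrightarrow> 0 \<le> (\<Sum>l\<in>UNIV. 1 - v k \<bullet> (B k l *v v l))"
      using le by (simp add: sum_nonneg)
    have A1: "\<forall>k\<in>UNIV. (\<Sum>l\<in>UNIV. 1 - v k \<bullet> (B k l *v v l)) = 0"
      by (rule iffD1[OF sum_nonneg_eq_0_iff[OF finite nn] z])
    have nn2: "\<And>l. l \<in> UNIV \<Longrightarrow> 0 \<le> 1 - v i \<bullet> (B i l *v v l)" using le by simp
    have A2: "\<forall>l\<in>UNIV. 1 - v i \<bullet> (B i l *v v l) = 0"
      using iffD1[OF sum_nonneg_eq_0_iff[OF finite nn2] A1[rule_format, OF UNIV_I]] by blast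
    then show ?thesis by simp
  qed
  have colK: "B k i *v v i = v k" for k i
  proof -
    have "B k i *v v i = B k k *v v k"
      using ker2[OF MB, of "v i" "v k" i k k] vv eq1 unfolding B_def by simp
    then show ?thesis by (simp add: B_def Bkk[OF MB])
  qed
  have swap: "B k i *v v j = B k j *v v i" for k i j
  proof -
    have "B i j *v v i = v j" using colK[of j i] Bsym[OF MB, of i j] unfolding B_def by simp
    then have "v j \<bullet> v j + v i \<bullet> v i - 2 * (v j \<bullet> (B i j *v v i)) = 0"
      using vv by simp
    then show ?thesis unfolding B_def by (rule ker2[OF MB, of "v j" "v i" i j k])
  qed
  have trB: "a \<bullet> (B i l *v b) = (B l i *v a) \<bullet> b" for a b i l
    unfolding B_def by (simp only: inner_tr Btr[OF MB])
  have vfun: "(\<lambda>i. column i V) = v" by (simp add: fun_eq_iff v_def)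
  have vecmV: "vecm V = emb v" by (simp add: vecm_emb vfun)
  have Mv: "Mstar *v vecm V = N *\<^sub>R vecm V"
  proof -
    have "Mstar *v vecm V = emb (\<lambda>k. \<Sum>l\<in>(UNIV::'n set). v k)"
      by (simp add: vecmV mult_emb colK flip: B_def)
    also have "\<dots> = N *\<^sub>R vecm V"
      by (simp add: vecmV emb_scale N_def sum_constant_scaleR del: sum_constant)
    finally show ?thesis .
  qed
  have "vecm V \<bullet> vecm V = N" by (simp add: vecmV inner_emb vv N_def)
  then have "vecm V \<noteq> 0" by (auto simp: N_def)
  then have E: "is_eigvec Mstar (vecm V) N" using Mv by (simp add: is_eigvec_def)
  have main: "\<exists>S. transpose S = S \<and> vecm (S ** V) = x \<and>
                 (x \<bullet> vecm V = 0 \<longrightarrow> (\<forall>i. column i V \<bullet> (S *v column i V) = 0))"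
    if ev: "Mstar *v x = lam *\<^sub>R x" and lam: "lam \<noteq> 0" for x lam
  proof -
    define w where "w = (1/lam) *\<^sub>R x"
    have Mw: "Mstar *v w = x" using ev lam by (simp add: w_def matrix_vector_mult_scaleR)
    define X where "X = vb x"
    define W where "W = vb w"
    have xX: "x = emb X" by (simp add: X_def emb_vb)
    have "Mstar *v emb W = emb X" using Mw by (simp only: W_def X_def emb_vb)
    then have "emb (\<lambda>k. \<Sum>l\<in>UNIV. B k l *v W l) = emb X"
      unfolding B_def by (simp only: mult_emb)
    then have Xk: "X k = (\<Sum>l\<in>UNIV. B k l *v W l)" for k by (simp add: emb_eq fun_eq_iff)
    have form: "v j \<bullet> X i = (\<Sum>l\<in>UNIV. (B l i *v v j) \<bullet> W l)" for i j
      by (simp add: Xk inner_sum_right trB)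
    have symm: "v j \<bullet> X i = v i \<bullet> X j" for i j
      unfolding form by (simp add: swap[of _ i j])
    define Xm :: "real^'n^'r" where "Xm = (\<chi> a i. X i $ a)"
    have cX: "column i Xm = X i" for i by (simp add: Xm_def column_def vec_eq_iff)
    obtain S where St: "transpose S = S" and SV: "S ** V = Xm"
      using sym_S[OF spans, of Xm] symm by (auto simp: cX v_def)
    have vS: "vecm (S ** V) = x" by (simp add: SV vecm_emb cX xX)
    have Sv: "S *v v i = X i" for i by (metis SV cX column_mult v_def)
    have diag: "v i \<bullet> X i = (\<Sum>l\<in>UNIV. v l \<bullet> W l)" for i
      by (simp add: form colK)
    have "x \<bullet> vecm V = N * (\<Sum>l\<in>UNIV. v l \<bullet> W l)"
      by (simp add: xX vecmV inner_emb inner_commute[of "X _"] diag N_def)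
    then have "x \<bullet> vecm V = 0 \<longrightarrow> (\<forall>i. v i \<bullet> (S *v v i) = 0)"
      by (simp add: Sv diag N_def)
    then show ?thesis using St vS unfolding v_def by blast
  qed
  show ?thesis
  proof (intro conjI allI impI)
    fix x lam assume "is_eigvec Mstar x lam \<and> lam \<noteq> 0"
    then obtain S where "transpose S = S" "vecm (S ** V) = x"
      using main unfolding is_eigvec_def by blast
    then show "x \<in> Vsym V" unfolding Vsym_def by blast
  next
    show "is_eigvec Mstar (vecm V) (real CARD('n))" using E by (simp add: N_def)
  next
    fix x lam assume a: "is_eigvec Mstar x lam \<and> lam \<noteq> 0 \<and> x \<bullet> vecm V = 0"
    then obtain S where "transpose S = S" "vecm (S ** V) = x"
       "\<forall>i. column i V \<bullet> (S *v column i V) = 0"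
      using main unfolding is_eigvec_def by blast
    then show "x \<in> Vsym' V" unfolding Vsym'_def by blast
  qed
qed

end
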